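(* Let $K$ be a minimal complete valuation field and let $R$ and $S$ be unital $K$-Banach algebras. Then the canonical map $R\hat\otimes_{\mathbb Z}S\to R\hat\otimes_K S$ (identity on simple tensors) is an isometric isomorphism of Banach rings, and likewise the canonical map $R\hat\otimes^{\mathrm{um}}_{\mathbb Z}S\to R\hat\otimes^{\mathrm{um}}_K S$ is an isometric isomorphism.
   Context: A Banach ring is a ring complete w.r.t. a submultiplicative norm; unital means $\|1\|=1$. A complete valuation field $K$ is minimal if it has no proper closed subfield; up to isometric isomorphism these are $\mathbb Q$ and $\mathbb F_p$ with the trivial absolute value, $\mathbb R$ with $|\cdot|^\upsilon$ ($0<\upsilon\le 1$, $|\cdot|$ Euclidean), and $\mathbb Q_p$ with $|\cdot|_p^\omega$ ($\omega>0$). A unital $K$-Banach algebra is a unital Banach ring $A$ together with a contractive unital ring homomorphism from $K$ into the center of $A$. Projective tensor products: for a commutative unital Banach ring $T$ and Banach $T$-modules $X,Y$, on the algebraic tensor product $X\otimes_T Y$ put $\|z\|_\wedge=\inf\{\sum_k\|a_k\|\|b_k\|\}$ and $\|z\|^{\mathrm{um}}_\wedge=\inf\{\max_k\|a_k\|\|b_k\|\}$, the infima over all representations $z=\sum_{k=1}^n a_k\otimes b_k$; $X\hat\otimes_T Y$ (resp. $X\hat\otimes^{\mathrm{um}}_T Y$) is the completion of $X\otimes_T Y$ modulo the kernel of $\|\cdot\|_\wedge$ (resp. $\|\cdot\|^{\mathrm{um}}_\wedge$). Every unital Banach ring is regarded as a $\mathbb Z$-algebra, $\mathbb Z$ carrying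 the Euclidean absolute value; for unital Banach $T$-algebras these tensor products are Banach rings with $(a\otimes b)(c\otimes d)=ac\otimes bd$. *)

theory Defs
  imports Complex_Main
begin

definition norm_complete :: "('a::ab_group_add \<Rightarrow> real) \<Rightarrow> bool" where
  "norm_complete n \<longleftrightarrow>
     (\<forall>X::nat \<Rightarrow> 'a.
        (\<forall>e>0. \<exists>N. \<forall>m\<ge>N. \<forall>k\<ge>N. n (X m - X k) < e) \<longrightarrow>
        (\<exists>L. (\<lambda>k. n (X k - L)) \<longlonglongrightarrow> 0))"

definition banach_ring :: "('a::ring_1 \<Rightarrow> real) \<Rightarrow> bool" where
  "banach_ring n \<longleftrightarrow>
     (\<forall>x. 0 \<le> n x) \<and> (\<forall>x. n x = 0 \<longleftrightarrow> x = 0) \<and>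
     (\<forall>x. n (- x) = n x) \<and>
     (\<forall>x y. n (x + y) \<le> n x + n y) \<and>
     (\<forall>x y. n (x * y) \<le> n x * n y) \<and>
     norm_complete n"

definition unital_banach_ring :: "('a::ring_1 \<Rightarrow> real) \<Rightarrow> bool" where
  "unital_banach_ring n \<longleftrightarrow> banach_ring n \<and> n 1 = 1"

definition complete_valuation_field :: "('k::field \<Rightarrow> real) \<Rightarrow> bool" where
  "complete_valuation_field v \<longleftrightarrow>
     (\<forall>x. 0 \<le> v x) \<and> (\<forall>x. v x = 0 \<longleftrightarrow> x = 0) \<and>
     (\<forall>x y. v (x * y) = v x * v y) \<and>
     (\<forall>x y. v (x + y) \<le> v x + v y) \<and>
     norm_complete v"

definition is_subfield :: "'k::field set \<Rightarrow> bool" where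
  "is_subfield F \<longleftrightarrow> 0 \<in> F \<and> 1 \<in> F \<and>
     (\<forall>x\<in>F. \<forall>y\<in>F. x + y \<in> F \<and> x * y \<in> F) \<and>
     (\<forall>x\<in>F. - x \<in> F) \<and> (\<forall>x\<in>F. x \<noteq> 0 \<longrightarrow> inverse x \<in> F)"

definition norm_closed :: "('a::ab_group_add \<Rightarrow> real) \<Rightarrow> 'a set \<Rightarrow> bool" where
  "norm_closed n F \<longleftrightarrow>
     (\<forall>X L. (\<forall>k. X k \<in> F) \<and> (\<lambda>k. n (X k - L)) \<longlonglongrightarrow> 0 \<longrightarrow> L \<in> F)"

definition minimal_complete_valuation_field :: "('k::field \<Rightarrow> real) \<Rightarrow> bool" where
  "minimal_complete_valuation_field v \<longleftrightarrow> complete_valuation_field v \<and>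
     (\<forall>F. is_subfield F \<and> norm_closed v F \<longrightarrow> F = UNIV)"

definition unital_K_banach_algebra ::
  "('k::field \<Rightarrow> real) \<Rightarrow> ('a::ring_1 \<Rightarrow> real) \<Rightarrow> ('k \<Rightarrow> 'a) \<Rightarrow> bool" where
  "unital_K_banach_algebra v n phi \<longleftrightarrow> unital_banach_ring n \<and>
     (\<forall>x y. phi (x + y) = phi x + phi y) \<and>
     (\<forall>x y. phi (x * y) = phi x * phi y) \<and>
     phi 1 = 1 \<and>
     (\<forall>x. n (phi x) \<le> v x) \<and>
     (\<forall>x a. phi x * a = a * phi x)"

text \<open>An element of the algebraic tensor product X \<otimes>_T Y is represented by a formal sum
  sum_k a_k \<otimes> b_k, encoded as a list of pairs. tensor_eq actX actY identifies two formal sums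
  iff they denote the same element of X \<otimes>_T Y, where actX, actY are the T-module actions.\<close>
inductive tensor_eq ::
  "('t \<Rightarrow> 'x::ab_group_add \<Rightarrow> 'x) \<Rightarrow> ('t \<Rightarrow> 'y::ab_group_add \<Rightarrow> 'y) \<Rightarrow>
   ('x \<times> 'y) list \<Rightarrow> ('x \<times> 'y) list \<Rightarrow> bool"
  for actX actY where
  te_refl: "tensor_eq actX actY xs xs"
| te_sym: "tensor_eq actX actY xs ys \<Longrightarrow> tensor_eq actX actY ys xs"
| te_trans: "tensor_eq actX actY xs ys \<Longrightarrow> tensor_eq actX actY ys zs \<Longrightarrow> tensor_eq actX actY xs zs"
| te_app: "tensor_eq actX actY xs ys \<Longrightarrow> tensor_eq actX actY (xs @ zs) (ys @ zs)"
| te_comm: "tensor_eq actX actY (xs @ ys) (ys @ xs)"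
| te_addL: "tensor_eq actX actY [(a + a', b)] [(a, b), (a', b)]"
| te_addR: "tensor_eq actX actY [(a, b + b')] [(a, b), (a, b')]"
| te_zero: "tensor_eq actX actY [(0, b)] []"
| te_scal: "tensor_eq actX actY [(actX t a, b)] [(a, actY t b)]"

definition proj_tensor_norm ::
  "('x::ab_group_add \<Rightarrow> real) \<Rightarrow> ('y::ab_group_add \<Rightarrow> real) \<Rightarrow>
   ('t \<Rightarrow> 'x \<Rightarrow> 'x) \<Rightarrow> ('t \<Rightarrow> 'y \<Rightarrow> 'y) \<Rightarrow> ('x \<times> 'y) list \<Rightarrow> real" where
  "proj_tensor_norm nX nY actX actY z =
     Inf {sum_list (map (\<lambda>(a, b). nX a * nY b) ys) | ys. tensor_eq actX actY ys z}"

definition proj_tensor_norm_um ::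
  "('x::ab_group_add \<Rightarrow> real) \<Rightarrow> ('y::ab_group_add \<Rightarrow> real) \<Rightarrow>
   ('t \<Rightarrow> 'x \<Rightarrow> 'x) \<Rightarrow> ('t \<Rightarrow> 'y \<Rightarrow> 'y) \<Rightarrow> ('x \<times> 'y) list \<Rightarrow> real" where
  "proj_tensor_norm_um nX nY actX actY z =
     Inf {foldr (\<lambda>(a, b) m. max (nX a * nY b) m) ys 0 | ys. tensor_eq actX actY ys z}"

definition int_act :: "int \<Rightarrow> 'a::ring_1 \<Rightarrow> 'a" where
  "int_act m a = of_int m * a"

definition alg_act :: "('k \<Rightarrow> 'a::ring_1) \<Rightarrow> 'k \<Rightarrow> 'a \<Rightarrow> 'a" where
  "alg_act phi c a = phi c * a"

end

theory Submission
  imports Defs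
begin

lemma te_cong_left:
  assumes "tensor_eq f g xs ys" shows "tensor_eq f g (zs @ xs) (zs @ ys)"
  by (meson assms te_app te_comm te_trans)

lemma te_cong:
  assumes "tensor_eq f g xs xs'" "tensor_eq f g ys ys'"
  shows "tensor_eq f g (xs @ ys) (xs' @ ys')"
  by (meson assms te_app te_cong_left te_trans)

lemma te_cancel: "tensor_eq f g [(a, c), (-a, c)] []"
proof -
  have "tensor_eq f g [(a, c), (-a, c)] [(a + -a, c)]" by (rule te_sym, rule te_addL)
  moreover have "tensor_eq f g [(a + -a, c)] []" using te_zero[of f g c] by simp
  ultimately show ?thesis by (rule te_trans)
qed

lemma add_hom_props:
  fixes phi :: "'k::field \<Rightarrow> 'r::ring_1"
  assumes "\<forall>x y. phi (x + y) = phi x + phi y" "phi 1 = 1"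
  shows "phi 0 = 0" "phi (- x) = - phi x" "phi (x - y) = phi x - phi y" "phi (of_int m) = of_int m"
proof -
  have "phi (0 + 0) = phi 0 + phi 0" using assms by blast
  then show z: "phi 0 = 0" by simp
  have "phi (x + - x) = phi x + phi (- x)" using assms by blast
  then show n: "phi (- x) = - phi x" using z by (simp add: add_eq_0_iff2)
  have "phi (x + - y) = phi x + phi (- y)" using assms by blast
  then show "phi (x - y) = phi x - phi y"
    using assms(1) z by (metis add_diff_cancel_right' diff_add_cancel)
  have nat: "phi (of_nat k) = of_nat k" for k
    by (induction k) (simp_all add: z assms)
  have n2: "phi (- y) = - phi y" for y
  proof -
    have "phi (y + - y) = phi y + phi (- y)" using assms by blast
    then show ?thesis using z by (simp add: add_eq_0_iff2)
  qed
  show "phi (of_int m) = of_int m"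
  proof (cases m rule: int_cases)
    case (nonneg k) then show ?thesis using nat by simp
  next
    case (neg k) then show ?thesis using nat n2 by (metis of_int_minus of_int_of_nat_eq)
  qed
qed

definition ratset :: "'k::field set" where
  "ratset = {of_int m * inverse (of_int n) | m n. (of_int n :: 'k) \<noteq> 0}"

lemma ratset_props:
  "(0::'k::field) \<in> ratset" "(1::'k) \<in> ratset"
  "x \<in> ratset \<Longrightarrow> y \<in> ratset \<Longrightarrow> x + y \<in> (ratset::'k set)"
  "x \<in> ratset \<Longrightarrow> y \<in> ratset \<Longrightarrow> x * y \<in> (ratset::'k set)"
  "x \<in> ratset \<Longrightarrow> - x \<in> (ratset::'k set)"
  "x \<in> ratset \<Longrightarrow> inverse x \<in> (ratset::'k set)"
proof -
  show "(0::'k) \<in> ratset" unfolding ratset_def by (rule CollectI, rule exI[of _ 0], rule exI[of _ 1]) simp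
  show "(1::'k) \<in> ratset" unfolding ratset_def by (rule CollectI, rule exI[of _ 1], rule exI[of _ 1]) simp
  show "x \<in> ratset \<Longrightarrow> y \<in> ratset \<Longrightarrow> x + y \<in> (ratset::'k set)"
  proof -
    assume "x \<in> ratset" "y \<in> ratset"
    then obtain m n m' n' where h: "x = of_int m * inverse (of_int n)" "(of_int n::'k) \<noteq> 0"
      "y = of_int m' * inverse (of_int n')" "(of_int n'::'k) \<noteq> 0" unfolding ratset_def by blast
    have "x + y = of_int (m * n' + m' * n) * inverse (of_int (n * n'))"
      using h by (simp add: field_simps)
    moreover have "(of_int (n * n')::'k) \<noteq> 0" using h by simp
    ultimately show ?thesis unfolding ratset_def by blast
  qed
  show "x \<in> ratset \<Longrightarrow> y \<in> ratset \<Longrightarrow> x * y \<in> (ratset::'k set)"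
  proof -
    assume "x \<in> ratset" "y \<in> ratset"
    then obtain m n m' n' where h: "x = of_int m * inverse (of_int n)" "(of_int n::'k) \<noteq> 0"
      "y = of_int m' * inverse (of_int n')" "(of_int n'::'k) \<noteq> 0" unfolding ratset_def by blast
    have "x * y = of_int (m * m') * inverse (of_int (n * n'))"
      unfolding h(1,3) using h(2,4) by (simp add: field_simps)
    moreover have "(of_int (n * n')::'k) \<noteq> 0" using h by simp
    ultimately show ?thesis unfolding ratset_def by blast
  qed
  show "x \<in> ratset \<Longrightarrow> - x \<in> (ratset::'k set)"
  proof -
    assume "x \<in> ratset"
    then obtain m n where h: "x = of_int m * inverse (of_int n)" "(of_int n::'k) \<noteq> 0"
      unfolding ratset_def by blast
    have "- x = of_int (- m) * inverse (of_int n)" using h by simp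
    then show ?thesis using h unfolding ratset_def by blast
  qed
  show "x \<in> ratset \<Longrightarrow> inverse x \<in> (ratset::'k set)"
  proof -
    assume "x \<in> ratset"
    then obtain m n where h: "x = of_int m * inverse (of_int n)" "(of_int n::'k) \<noteq> 0"
      unfolding ratset_def by blast
    show ?thesis
    proof (cases "(of_int m::'k) = 0")
      case True
      then have "inverse x = 0" using h by simp
      then show ?thesis using \<open>(0::'k) \<in> ratset\<close> by simp
    next
      case False
      have "inverse x = of_int n * inverse (of_int m)" unfolding h(1) using h(2) False by (simp add: field_simps)
      then show ?thesis using False unfolding ratset_def by blast
    qed
  qed
qed

lemma cvf_basic:
  assumes "complete_valuation_field v"
  shows "v 1 = 1" "v (- x) = v x" "v (x - y) = v (y - x)" "x \<noteq> 0 \<Longrightarrow> v (inverse x) = inverse (v x)"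
    "v x - v y \<le> v (x - y)" "0 \<le> v x" "v (x + y) \<le> v x + v y" "v (x * y) = v x * v y"
    "v 0 = 0"
proof -
  have a: "\<forall>x. 0 \<le> v x" "\<forall>x. v x = 0 \<longleftrightarrow> x = 0" "\<forall>x y. v (x * y) = v x * v y"
    "\<forall>x y. v (x + y) \<le> v x + v y" using assms unfolding complete_valuation_field_def by auto
  show "0 \<le> v x" "v (x + y) \<le> v x + v y" "v (x * y) = v x * v y" "v 0 = 0" using a by auto
  have "v 1 * v 1 = v 1" using a(3)[rule_format, of 1 1] by simp
  moreover have "v 1 \<noteq> 0" using a(2) by simp
  ultimately show v1: "v 1 = 1" by simp
  have "v (-1) * v (-1) = 1" using a(3)[rule_format, of "-1" "-1"] v1 by simp
  then have "(v (-1) - 1) * (v (-1) + 1) = 0" by (simp add: algebra_simps)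
  moreover have "v (-1) + 1 \<noteq> 0" using a(1) by (metis add_nonneg_pos less_numeral_extra(1) order_less_irrefl)
  ultimately have vm1: "v (-1) = 1" by simp
  have vneg: "v (- z) = v z" for z using a(3)[rule_format, of "-1" z] vm1 by simp
  then show "v (- x) = v x" .
  show "v (x - y) = v (y - x)" using vneg[of "x - y"] by simp
  show "x \<noteq> 0 \<Longrightarrow> v (inverse x) = inverse (v x)"
  proof -
    assume "x \<noteq> 0"
    then have "v x * v (inverse x) = 1" using a(3)[rule_format, of x "inverse x"] v1 by simp
    then show ?thesis by (simp add: inverse_unique)
  qed
  have "v x \<le> v (x - y) + v y" using a(4)[rule_format, of "x - y" y] by simp
  then show "v x - v y \<le> v (x - y)" by simp
qed

lemma dense_ratset:
  fixes v :: "'k::field \<Rightarrow> real"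
  assumes mv: "minimal_complete_valuation_field v" and e: "e > 0"
  shows "\<exists>q\<in>ratset. v (t - q) < e"
proof -
  have cv: "complete_valuation_field v" using mv unfolding minimal_complete_valuation_field_def by blast
  note vb = cvf_basic[OF cv]
  define F where "F = {L. \<forall>e>0. \<exists>q\<in>ratset. v (L - q) < e}"
  have PF: "x \<in> F" if "x \<in> ratset" for x
  proof -
    have "\<forall>e>0. \<exists>q\<in>ratset. v (x - q) < e"
    proof (intro allI impI)
      fix e :: real assume "e > 0"
      then have "v (x - x) < e" using vb(9) by simp
      then show "\<exists>q\<in>ratset. v (x - q) < e" using that by blast
    qed
    then show ?thesis unfolding F_def by blast
  qed
  have add: "x + y \<in> F" if xF: "x \<in> F" and yF: "y \<in> F" for x y
    unfolding F_def
  proof (intro CollectI allI impI)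
    fix e :: real assume "e > 0"
    then have e2: "e/2 > 0" by simp
    obtain p where "p \<in> ratset" "v (x - p) < e/2" using xF e2 unfolding F_def by blast
    moreover obtain q where "q \<in> ratset" "v (y - q) < e/2" using yF e2 unfolding F_def by blast
    moreover have "v ((x + y) - (p + q)) \<le> v (x - p) + v (y - q)"
      using vb(7)[of "x - p" "y - q"] by (simp add: algebra_simps)
    ultimately have "p + q \<in> ratset" "v (x + y - (p + q)) < e" using ratset_props(3) by auto
    then show "\<exists>q\<in>ratset. v (x + y - q) < e" by blast
  qed
  have neg: "- x \<in> F" if xF: "x \<in> F" for x
    unfolding F_def
  proof (intro CollectI allI impI)
    fix e :: real assume "e > 0"
    then obtain p where "p \<in> ratset" "v (x - p) < e"
      using xF unfolding F_def by blast
    moreover have "v (- x - (- p)) = v (x - p)" using vb(2)[of "x - p"] by simp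
    ultimately have "- p \<in> ratset" "v (- x - (- p)) < e" using ratset_props(5) by auto
    then show "\<exists>q\<in>ratset. v (- x - q) < e" by blast
  qed
  have mul: "x * y \<in> F" if xF: "x \<in> F" and yF: "y \<in> F" for x y
    unfolding F_def
  proof (intro CollectI allI impI)
    fix e :: real assume e: "e > 0"
    define M where "M = v x + v y + 1"
    have M: "M > 0" unfolding M_def using vb(6)[of x] vb(6)[of y] by linarith
    define d where "d = min 1 (e / (2 * M))"
    have d: "d > 0" "d \<le> 1" "d * M \<le> e / 2" using e M unfolding d_def
      by (auto simp: field_simps min_def)
    obtain p q where pq: "p \<in> ratset" "v (x - p) < d" "q \<in> ratset" "v (y - q) < d"
      using xF yF d(1) unfolding F_def by blast
    have vq: "v q \<le> v y + 1"
      using vb(5)[of q y] vb(3)[of q y] pq(4) d(2) by linarith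
    have eq: "x * y - p * q = x * (y - q) + (x - p) * q" by (simp add: algebra_simps)
    have "v (x * y - p * q) \<le> v x * v (y - q) + v (x - p) * v q"
      unfolding eq using vb(7) vb(8) by metis
    also have "\<dots> \<le> v x * d + d * (v y + 1)"
    proof -
      have "v x * v (y - q) \<le> v x * d" using mult_left_mono[of "v (y - q)" d "v x"] pq(4) vb(6) by simp
      moreover have "v (x - p) * v q \<le> d * (v y + 1)"
        using mult_mono[of "v (x - p)" d "v q" "v y + 1"] pq(2) vq d(1) vb(6)[of q] by simp
      ultimately show ?thesis by linarith
    qed
    also have "\<dots> = d * M" unfolding M_def by (simp add: algebra_simps)
    finally have "v (x * y - p * q) < e" using d(3) e by linarith
    then show "\<exists>q\<in>ratset. v (x * y - q) < e" using ratset_props(4)[OF pq(1) pq(3)] by blast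
  qed
  have inv: "inverse x \<in> F" if xF: "x \<in> F" and x0: "x \<noteq> 0" for x
    unfolding F_def
  proof (intro CollectI allI impI)
    fix e :: real assume e: "e > 0"
    have vx: "v x > 0" using vb(6)[of x] x0 cv unfolding complete_valuation_field_def
      by (metis less_eq_real_def)
    define d where "d = min (v x / 2) (e * v x * v x / 4)"
    have d: "d > 0" "d \<le> v x / 2" "d \<le> e * v x * v x / 4" using e vx unfolding d_def by auto
    obtain p where p: "p \<in> ratset" "v (x - p) < d" using xF d(1) unfolding F_def by blast
    have vp: "v p \<ge> v x / 2" using vb(5)[of x p] p(2) d(2) by linarith
    then have p0: "p \<noteq> 0" using vx vb(9) by auto
    have eq: "inverse x - inverse p = (p - x) * (inverse x * inverse p)"
      using x0 p0 by (simp add: field_simps)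
    have "v (inverse x - inverse p) = v (x - p) * (inverse (v x) * inverse (v p))"
      unfolding eq using vb(8) vb(4) vb(3) x0 p0 by metis
    also have "\<dots> \<le> d * (inverse (v x) * inverse (v x / 2))"
    proof -
      have i1: "inverse (v p) \<le> inverse (v x / 2)" using le_imp_inverse_le[OF vp] vx by simp
      have "inverse (v x) * inverse (v p) \<le> inverse (v x) * inverse (v x / 2)"
        using mult_left_mono[OF i1] vx by simp
      moreover have "0 \<le> inverse (v x) * inverse (v p)" using vx vp by simp
      ultimately show ?thesis using mult_mono[of "v (x - p)" d "inverse (v x) * inverse (v p)" "inverse (v x) * inverse (v x / 2)"] p(2) d(1) by linarith
    qed
    also have "\<dots> = d * 2 / (v x * v x)" using vx by (simp add: field_simps)
    also have "\<dots> \<le> e / 2" using d(3) vx by (simp add: field_simps)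
    finally have "v (inverse x - inverse p) < e" using e by linarith
    then show "\<exists>q\<in>ratset. v (inverse x - q) < e" using ratset_props(6)[OF p(1)] by blast
  qed
  have sub: "is_subfield F" unfolding is_subfield_def
    using PF ratset_props(1,2) add mul neg inv by blast
  have cl: "norm_closed v F" unfolding norm_closed_def
  proof (intro allI impI)
    fix X L assume h: "(\<forall>k. X k \<in> F) \<and> (\<lambda>k. v (X k - L)) \<longlonglongrightarrow> 0"
    show "L \<in> F" unfolding F_def
    proof (intro CollectI allI impI)
      fix e :: real assume e: "e > 0"
      have e2': "e/2 > 0" using e by simp
      from h have "\<exists>N. \<forall>k\<ge>N. norm (v (X k - L) - 0) < e/2"
        using e2' LIMSEQ_iff[of "\<lambda>k. v (X k - L)" 0] by blast
      then obtain N where "\<forall>k\<ge>N. norm (v (X k - L) - 0) < e/2" by blast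
      then have "\<bar>v (X N - L)\<bar> < e/2" by simp
      then obtain k where k: "v (X k - L) < e/2" by (meson abs_less_iff)
      have e2: "e/2 > 0" using e by simp
      obtain q where q: "q \<in> ratset" "v (X k - q) < e/2" using h e2 unfolding F_def by blast
      have "v (L - q) \<le> v (L - X k) + v (X k - q)" using vb(7)[of "L - X k" "X k - q"] by simp
      then have "v (L - q) < e" using k q vb(3)[of L "X k"] by linarith
      then show "\<exists>q\<in>ratset. v (L - q) < e" using q by blast
    qed
  qed
  have "F = UNIV" using mv sub cl unfolding minimal_complete_valuation_field_def by blast
  then show ?thesis using e unfolding F_def by blast
qed

definition NZ :: "(('x::ring_1 \<times> 'y::ring_1) list \<Rightarrow> real) \<Rightarrow> ('x \<times> 'y) list \<Rightarrow> real" where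
  "NZ C z = Inf {C ys | ys. tensor_eq int_act int_act ys z}"

lemma NZ_lower:
  assumes "\<forall>ys. 0 \<le> C ys" "tensor_eq int_act int_act ys z"
  shows "NZ C z \<le> C ys"
  unfolding NZ_def
  by (rule cInf_lower) (use assms in \<open>auto intro!: bdd_belowI[of _ 0]\<close>)

lemma NZ_nonneg:
  assumes "\<forall>ys. 0 \<le> C ys"
  shows "0 \<le> NZ C z"
  unfolding NZ_def
  by (rule cInf_greatest) (use assms te_refl[of int_act int_act z] in auto)

lemma NZ_eq:
  assumes "tensor_eq int_act int_act x y"
  shows "NZ C x = NZ C y"
proof -
  have "{C ys | ys. tensor_eq int_act int_act ys x} = {C ys | ys. tensor_eq int_act int_act ys y}"
    using assms te_trans te_sym by metis
  then show ?thesis unfolding NZ_def by simp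
qed

lemma NZ_sub:
  assumes Cnn: "\<forall>ys. 0 \<le> C ys" and Capp: "\<forall>p q. C (p @ q) \<le> C p + C q"
  shows "NZ C (y @ d) \<le> NZ C y + NZ C d"
proof -
  have 1: "NZ C (y @ d) - C q \<le> C p" if "tensor_eq int_act int_act p y" "tensor_eq int_act int_act q d" for p q
  proof -
    have "tensor_eq int_act int_act (p @ q) (y @ d)" using te_cong that by blast
    then have "NZ C (y @ d) \<le> C (p @ q)" using NZ_lower Cnn by blast
    then show ?thesis using Capp by (smt (verit))
  qed
  have 2: "NZ C (y @ d) - C q \<le> NZ C y" if "tensor_eq int_act int_act q d" for q
    unfolding NZ_def[of C y]
    by (rule cInf_greatest) (use 1 that te_refl[of int_act int_act y] in auto)
  have "NZ C (y @ d) - NZ C y \<le> NZ C d"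
    unfolding NZ_def[of C d]
    by (rule cInf_greatest) (use 2 te_refl[of int_act int_act d] in \<open>force+\<close>)
  then show ?thesis by simp
qed

lemma NZ_absorb:
  assumes Cnn: "\<forall>ys. 0 \<le> C ys" and Capp: "\<forall>p q. C (p @ q) \<le> C p + C q"
    and "tensor_eq int_act int_act x (y @ d)" "NZ C d \<le> 0"
  shows "NZ C x \<le> NZ C y"
  using NZ_eq[OF assms(3), of C] NZ_sub[OF Cnn Capp, of y d] assms(4) by simp

lemma te_move:
  "tensor_eq f g ([p] @ w) (([(c, y)] @ w) @ ([p] @ [(- c, y)]))"
proof -
  have c: "tensor_eq f g [(- c, y), (c, y)] []" using te_cancel[of f g "- c" y] by simp
  have "tensor_eq f g ([p] @ ([(- c, y), (c, y)] @ w)) ([p] @ ([] @ w))"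
    by (rule te_cong_left, rule te_app, rule c)
  then have a: "tensor_eq f g (([p] @ [(- c, y)]) @ ([(c, y)] @ w)) ([p] @ w)" by simp
  have b: "tensor_eq f g (([(c, y)] @ w) @ ([p] @ [(- c, y)])) (([p] @ [(- c, y)]) @ ([(c, y)] @ w))"
    by (rule te_comm)
  show ?thesis by (rule te_sym, rule te_trans[OF b a])
qed

lemma ratzero:
  fixes phi :: "'k::field \<Rightarrow> 'r::ring_1" and psi :: "'k \<Rightarrow> 's::ring_1"
  assumes pa: "\<forall>x y. phi (x + y) = phi x + phi y" and pm: "\<forall>x y. phi (x * y) = phi x * phi y"
    and p1: "phi 1 = 1"
    and sa: "\<forall>x y. psi (x + y) = psi x + psi y" and sm: "\<forall>x y. psi (x * y) = psi x * psi y"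
    and s1: "psi 1 = 1"
    and q: "q \<in> ratset"
  shows "tensor_eq int_act int_act [(phi q * a, b), (- a, psi q * b)] []"
proof -
  obtain m n where h: "q = of_int m * inverse (of_int n)" "(of_int n::'k) \<noteq> 0"
    using q unfolding ratset_def by blast
  define c where "c = phi (inverse (of_int n))"
  define d where "d = psi (inverse (of_int n))"
  have nc: "of_int n * c = 1" unfolding c_def
    using pm add_hom_props(4)[OF pa p1, of n] p1 h(2) by (metis right_inverse)
  have nd: "of_int n * d = 1" unfolding d_def
    using sm add_hom_props(4)[OF sa s1, of n] s1 h(2) by (metis right_inverse)
  have pq: "phi q = of_int m * c" unfolding c_def h(1) using pm add_hom_props(4)[OF pa p1, of m] by metis
  have sq: "psi q = of_int m * d" unfolding d_def h(1) using sm add_hom_props(4)[OF sa s1, of m] by metis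
  have 1: "tensor_eq int_act int_act [(phi q * a, b)] [(c * a, of_int m * b)]"
    using te_scal[of int_act int_act m "c * a" b] unfolding int_act_def pq by (simp add: mult.assoc)
  have e1: "of_int n * (c * - a) = - a" using nc by (simp add: mult.assoc[symmetric])
  have e2: "of_int n * (psi q * b) = of_int m * b"
  proof -
    have "of_int n * (psi q * b) = (of_int n * of_int m) * d * b" unfolding sq by (simp add: mult.assoc)
    also have "\<dots> = (of_int m * of_int n) * d * b"
      by (metis mult.commute of_int_mult)
    also have "\<dots> = of_int m * (of_int n * d) * b" by (simp only: mult.assoc)
    finally show ?thesis using nd by simp
  qed
  have 2: "tensor_eq int_act int_act [(- a, psi q * b)] [(- (c * a), of_int m * b)]"
    using te_scal[of int_act int_act n "c * - a" "psi q * b"] unfolding int_act_def e1 e2 by simp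
  have 3: "tensor_eq int_act int_act ([(phi q * a, b)] @ [(- a, psi q * b)])
     ([(c * a, of_int m * b)] @ [(- (c * a), of_int m * b)])" by (rule te_cong[OF 1 2])
  then show ?thesis using te_cancel[of int_act int_act "c * a" "of_int m * b"] te_trans by fastforce
qed

lemma ukba_props:
  assumes "unital_K_banach_algebra v n phi"
  shows "\<forall>x y. phi (x + y) = phi x + phi y" "\<forall>x y. phi (x * y) = phi x * phi y" "phi 1 = 1"
    "\<forall>x. n (phi x) \<le> v x" "\<forall>x. 0 \<le> n x" "\<forall>x. n (- x) = n x" "\<forall>x y. n (x * y) \<le> n x * n y"
  using assms unfolding unital_K_banach_algebra_def unital_banach_ring_def banach_ring_def by blast+

lemma key:
  fixes v :: "'k::field \<Rightarrow> real"
    and nR :: "'r::ring_1 \<Rightarrow> real" and nS :: "'s::ring_1 \<Rightarrow> real"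
    and phi :: "'k \<Rightarrow> 'r" and psi :: "'k \<Rightarrow> 's"
  assumes mv: "minimal_complete_valuation_field v"
    and hR: "unital_K_banach_algebra v nR phi"
    and hS: "unital_K_banach_algebra v nS psi"
    and Cnn: "\<forall>ys. 0 \<le> C ys"
    and C2: "\<forall>x1 y1 x2 y2. C [(x1, y1), (x2, y2)] \<le> nR x1 * nS y1 + nR x2 * nS y2"
  shows "NZ C [(phi t * a, b), (- a, psi t * b)] \<le> 0"
proof (rule field_le_epsilon)
  fix e :: real assume e: "0 < e"
  note R = ukba_props[OF hR] and S = ukba_props[OF hS]
  define B where "B = 2 * nR a * nS b + 1"
  have B: "B > 0" "2 * nR a * nS b \<le> B" unfolding B_def using R(5) S(5)
    by (simp_all add: add_nonneg_pos)
  obtain q where q: "q \<in> ratset" "v (t - q) < e / B" using dense_ratset[OF mv, of "e / B" t] e B by auto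
  define A1 where "A1 = (phi (t - q) * a, b)"
  define B1 where "B1 = (- a, psi (t - q) * b)"
  define A2 where "A2 = (phi q * a, b)"
  define B2 where "B2 = (- a, psi q * b)"
  have ph: "phi t * a = phi (t - q) * a + phi q * a"
    using R(1) by (metis diff_add_cancel distrib_right)
  have ps: "psi t * b = psi (t - q) * b + psi q * b"
    using S(1) by (metis diff_add_cancel distrib_right)
  have s1: "tensor_eq int_act int_act [(phi t * a, b)] [A1, A2]"
    unfolding A1_def A2_def ph by (rule te_addL)
  have s2: "tensor_eq int_act int_act [(- a, psi t * b)] [B1, B2]"
    unfolding B1_def B2_def ps by (rule te_addR)
  have s3: "tensor_eq int_act int_act [(phi t * a, b), (- a, psi t * b)] [A1, A2, B1, B2]"
    using te_cong[OF s1 s2] by simp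
  have "tensor_eq int_act int_act ([A2] @ [B1]) ([B1] @ [A2])" by (rule te_comm)
  then have "tensor_eq int_act int_act (([A2] @ [B1]) @ [B2]) (([B1] @ [A2]) @ [B2])" by (rule te_app)
  then have "tensor_eq int_act int_act ([A1] @ (([A2] @ [B1]) @ [B2])) ([A1] @ (([B1] @ [A2]) @ [B2]))"
    by (rule te_cong_left)
  then have s4: "tensor_eq int_act int_act [A1, A2, B1, B2] ([A1, B1] @ [A2, B2])" by simp
  have rz: "tensor_eq int_act int_act [A2, B2] []" unfolding A2_def B2_def
    by (rule ratzero[OF R(1,2,3) S(1,2,3) q(1)])
  have s5: "tensor_eq int_act int_act ([A1, B1] @ [A2, B2]) ([A1, B1] @ [])"
    by (rule te_cong_left[OF rz])
  have s6: "tensor_eq int_act int_act [A1, B1] [(phi t * a, b), (- a, psi t * b)]"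
    using te_sym[OF te_trans[OF te_trans[OF s3 s4] s5]] by simp
  have "NZ C [(phi t * a, b), (- a, psi t * b)] \<le> C [A1, B1]" by (rule NZ_lower[OF Cnn s6])
  also have "\<dots> \<le> nR (phi (t - q) * a) * nS b + nR (- a) * nS (psi (t - q) * b)"
    unfolding A1_def B1_def using C2 by blast
  also have "\<dots> \<le> (v (t - q) * nR a) * nS b + nR a * (v (t - q) * nS b)"
  proof -
    have h1: "nR (phi (t - q) * a) \<le> v (t - q) * nR a"
    proof -
      have "nR (phi (t - q) * a) \<le> nR (phi (t - q)) * nR a" using R(7) by blast
      moreover have "nR (phi (t - q)) * nR a \<le> v (t - q) * nR a"
        using mult_right_mono[of "nR (phi (t - q))" "v (t - q)" "nR a"] R(4) R(5) by blast
      ultimately show ?thesis by linarith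
    qed
    have h2: "nS (psi (t - q) * b) \<le> v (t - q) * nS b"
    proof -
      have "nS (psi (t - q) * b) \<le> nS (psi (t - q)) * nS b" using S(7) by blast
      moreover have "nS (psi (t - q)) * nS b \<le> v (t - q) * nS b"
        using mult_right_mono[of "nS (psi (t - q))" "v (t - q)" "nS b"] S(4) S(5) by blast
      ultimately show ?thesis by linarith
    qed
    have "nR (phi (t - q) * a) * nS b \<le> (v (t - q) * nR a) * nS b"
      using mult_right_mono[OF h1] S(5) by blast
    moreover have "nR a * nS (psi (t - q) * b) \<le> nR a * (v (t - q) * nS b)"
      using mult_left_mono[OF h2] R(5) by blast
    ultimately have X: "nR (phi (t - q) * a) * nS b + nR a * nS (psi (t - q) * b)
       \<le> v (t - q) * nR a * nS b + nR a * (v (t - q) * nS b)" by (rule add_mono)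
    have na: "nR (- a) = nR a" using R(6) by blast
    show ?thesis unfolding na using X .
  qed
  also have "\<dots> = v (t - q) * (2 * nR a * nS b)" by (simp add: algebra_simps)
  also have "\<dots> \<le> v (t - q) * B"
  proof -
    have "0 \<le> v (t - q)" using mv cvf_basic(6) unfolding minimal_complete_valuation_field_def by blast
    then show ?thesis using B(2) mult_left_mono by blast
  qed
  also have "\<dots> \<le> e"
  proof -
    have "v (t - q) * B < e" using q(2) B(1) by (simp add: less_divide_eq)
    then show ?thesis by linarith
  qed
  finally show "NZ C [(phi t * a, b), (- a, psi t * b)] \<le> 0 + e" by simp
qed


lemma Kinv:
  fixes phi :: "'k \<Rightarrow> 'r::ring_1" and psi :: "'k \<Rightarrow> 's::ring_1"
  assumes "tensor_eq (alg_act phi) (alg_act psi) xs ys"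
    and hz: "\<And>t a b. NZ C [(phi t * a, b), (- a, psi t * b)] \<le> 0"
    and Cnn: "\<forall>ys. 0 \<le> C ys" and Capp: "\<forall>p q. C (p @ q) \<le> C p + C q"
  shows "\<forall>w. NZ C (xs @ w) = NZ C (ys @ w)"
  using assms(1)
proof (induction rule: tensor_eq.induct)
  case (te_refl xs) then show ?case by simp
next
  case (te_sym xs ys) then show ?case by simp
next
  case (te_trans xs ys zs) then show ?case by simp
next
  case (te_app xs ys zs) then show ?case by (metis append_assoc)
next
  case (te_comm xs ys) then show ?case
    by (metis NZ_eq te_app tensor_eq.te_comm)
next
  case (te_addL a a' b) then show ?case
    by (metis NZ_eq te_app tensor_eq.te_addL)
next
  case (te_addR a b b') then show ?case
    by (metis NZ_eq te_app tensor_eq.te_addR)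
next
  case (te_zero b) then show ?case
    by (metis NZ_eq te_app tensor_eq.te_zero)
next
  case (te_scal t a b)
  show ?case
  proof
    fix w
    have d1: "NZ C ([(phi t * a, b)] @ [(- a, psi t * b)]) \<le> 0" using hz by simp
    have d2: "NZ C ([(a, psi t * b)] @ [(- (phi t * a), b)]) \<le> 0"
    proof -
      have "NZ C ([(a, psi t * b)] @ [(- (phi t * a), b)]) = NZ C ([(- (phi t * a), b)] @ [(a, psi t * b)])"
        by (rule NZ_eq, rule tensor_eq.te_comm)
      also have "\<dots> = NZ C [(phi t * (- a), b), (- (- a), psi t * b)]" by simp
      also have "\<dots> \<le> 0" by (rule hz)
      finally show ?thesis .
    qed
    have i1: "NZ C ([(phi t * a, b)] @ w) \<le> NZ C ([(a, psi t * b)] @ w)"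
      by (rule NZ_absorb[OF Cnn Capp te_move d1])
    have i2: "NZ C ([(a, psi t * b)] @ w) \<le> NZ C ([(phi t * a, b)] @ w)"
      by (rule NZ_absorb[OF Cnn Capp te_move d2])
    show "NZ C ([(alg_act phi t a, b)] @ w) = NZ C ([(a, alg_act psi t b)] @ w)"
      unfolding alg_act_def using i1 i2 by linarith
  qed
qed

lemma ZK:
  fixes phi :: "'k::field \<Rightarrow> 'r::ring_1" and psi :: "'k \<Rightarrow> 's::ring_1"
  assumes "tensor_eq int_act int_act xs ys"
    and pa: "\<forall>x y. phi (x + y) = phi x + phi y" and p1: "phi 1 = 1"
    and sa: "\<forall>x y. psi (x + y) = psi x + psi y" and s1: "psi 1 = 1"
  shows "tensor_eq (alg_act phi) (alg_act psi) xs ys"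
  using assms(1)
proof (induction rule: tensor_eq.induct)
  case (te_scal t a b)
  have "tensor_eq (alg_act phi) (alg_act psi) [(alg_act phi (of_int t) a, b)] [(a, alg_act psi (of_int t) b)]"
    by (rule tensor_eq.te_scal)
  then show ?case unfolding alg_act_def int_act_def
    using add_hom_props(4)[OF pa p1, of t] add_hom_props(4)[OF sa s1, of t] by simp
qed (auto intro: tensor_eq.intros)

lemma main_norm:
  fixes v :: "'k::field \<Rightarrow> real"
    and nR :: "'r::ring_1 \<Rightarrow> real" and nS :: "'s::ring_1 \<Rightarrow> real"
    and phi :: "'k \<Rightarrow> 'r" and psi :: "'k \<Rightarrow> 's"
  assumes mv: "minimal_complete_valuation_field v"
    and hR: "unital_K_banach_algebra v nR phi"
    and hS: "unital_K_banach_algebra v nS psi"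
    and Cnn: "\<forall>ys. 0 \<le> C ys" and Capp: "\<forall>p q. C (p @ q) \<le> C p + C q"
    and C2: "\<forall>x1 y1 x2 y2. C [(x1, y1), (x2, y2)] \<le> nR x1 * nS y1 + nR x2 * nS y2"
  shows "Inf {C ys | ys. tensor_eq (alg_act phi) (alg_act psi) ys z} = NZ C z"
proof (rule antisym)
  note R = ukba_props[OF hR] and S = ukba_props[OF hS]
  have sub: "{C ys | ys. tensor_eq int_act int_act ys z} \<subseteq> {C ys | ys. tensor_eq (alg_act phi) (alg_act psi) ys z}"
    using ZK[OF _ R(1) R(3) S(1) S(3)] by blast
  show "Inf {C ys | ys. tensor_eq (alg_act phi) (alg_act psi) ys z} \<le> NZ C z"
    unfolding NZ_def
    by (rule cInf_superset_mono[OF _ _ sub]) (use Cnn te_refl[of int_act int_act z] in \<open>auto intro!: bdd_belowI[of _ 0]\<close>)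
  have hz: "\<And>t a b. NZ C [(phi t * a, b), (- a, psi t * b)] \<le> 0"
    using key[OF mv hR hS Cnn C2] by blast
  show "NZ C z \<le> Inf {C ys | ys. tensor_eq (alg_act phi) (alg_act psi) ys z}"
  proof (rule cInf_greatest)
    show "{C ys | ys. tensor_eq (alg_act phi) (alg_act psi) ys z} \<noteq> {}"
      using te_refl[of "alg_act phi" "alg_act psi" z] by blast
    fix c assume "c \<in> {C ys | ys. tensor_eq (alg_act phi) (alg_act psi) ys z}"
    then obtain ys where ys: "c = C ys" "tensor_eq (alg_act phi) (alg_act psi) ys z" by blast
    have "NZ C (ys @ []) = NZ C (z @ [])" using Kinv[OF ys(2) hz Cnn Capp] by blast
    then have "NZ C z = NZ C ys" by simp
    also have "\<dots> \<le> C ys" by (rule NZ_lower[OF Cnn te_refl])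
    finally show "NZ C z \<le> c" using ys(1) by simp
  qed
qed

lemma um_nonneg:
  assumes "\<forall>x. 0 \<le> nR x" "\<forall>y. 0 \<le> nS y"
  shows "0 \<le> foldr (\<lambda>(a, b) m. max (nR a * nS b) m) ys (0::real)"
  by (induction ys) (auto simp: max_def)

lemma um_app_aux:
  "(0::real) \<le> i \<Longrightarrow> foldr (\<lambda>(a, b) m. max (nR a * nS b) m) p i
     = max (foldr (\<lambda>(a, b) m. max (nR a * nS b) m) p 0) i"
  by (induction p) (auto simp: max.assoc)

theorem lemma2p3:
  fixes v :: "'k::field \<Rightarrow> real"
    and nR :: "'r::ring_1 \<Rightarrow> real" and nS :: "'s::ring_1 \<Rightarrow> real"
    and phi :: "'k \<Rightarrow> 'r" and psi :: "'k \<Rightarrow> 's"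
  assumes "minimal_complete_valuation_field v"
    and "unital_K_banach_algebra v nR phi"
    and "unital_K_banach_algebra v nS psi"
  shows "(\<forall>xs ys. tensor_eq int_act int_act xs ys \<longrightarrow> tensor_eq (alg_act phi) (alg_act psi) xs ys)
       \<and> (\<forall>z. proj_tensor_norm nR nS (alg_act phi) (alg_act psi) z
               = proj_tensor_norm nR nS int_act int_act z)
       \<and> (\<forall>z. proj_tensor_norm_um nR nS (alg_act phi) (alg_act psi) z
               = proj_tensor_norm_um nR nS int_act int_act z)"
proof (intro conjI allI impI)
  note R = ukba_props[OF assms(2)] and S = ukba_props[OF assms(3)]
  fix xs ys :: "('r \<times> 's) list"
  assume "tensor_eq int_act int_act xs ys"
  then show "tensor_eq (alg_act phi) (alg_act psi) xs ys"
    using ZK R(1) R(3) S(1) S(3) by blast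
next
  note R = ukba_props[OF assms(2)] and S = ukba_props[OF assms(3)]
  fix z :: "('r \<times> 's) list"
  define C where "C = (\<lambda>ys. sum_list (map (\<lambda>(a, b). nR a * nS b) ys))"
  have Cnn: "\<forall>ys. 0 \<le> C ys" unfolding C_def
    using R(5) S(5) by (auto intro!: sum_list_nonneg)
  have Capp: "\<forall>p q. C (p @ q) \<le> C p + C q" unfolding C_def by simp
  have C2: "\<forall>x1 y1 x2 y2. C [(x1, y1), (x2, y2)] \<le> nR x1 * nS y1 + nR x2 * nS y2"
    unfolding C_def by simp
  have "Inf {C ys | ys. tensor_eq (alg_act phi) (alg_act psi) ys z} = NZ C z"
    by (rule main_norm[OF assms Cnn Capp C2])
  then show "proj_tensor_norm nR nS (alg_act phi) (alg_act psi) z = proj_tensor_norm nR nS int_act int_act z"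
    unfolding proj_tensor_norm_def NZ_def C_def by simp
next
  note R = ukba_props[OF assms(2)] and S = ukba_props[OF assms(3)]
  fix z :: "('r \<times> 's) list"
  define C where "C = (\<lambda>ys. foldr (\<lambda>(a, b) m. max (nR a * nS b) m) ys (0::real))"
  have Cnn: "\<forall>ys. 0 \<le> C ys" unfolding C_def
    using um_nonneg[OF R(5) S(5)] by blast
  have Capp: "\<forall>p q. C (p @ q) \<le> C p + C q"
  proof (intro allI)
    fix p q
    have "C (p @ q) = max (C p) (C q)"
      unfolding C_def foldr_append using um_app_aux[of "C q" nR nS p] Cnn unfolding C_def by simp
    then show "C (p @ q) \<le> C p + C q" using Cnn by simp
  qed
  have C2: "\<forall>x1 y1 x2 y2. C [(x1, y1), (x2, y2)] \<le> nR x1 * nS y1 + nR x2 * nS y2"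
  proof (intro allI)
    fix x1 y1 x2 y2
    have "0 \<le> nR x1 * nS y1" "0 \<le> nR x2 * nS y2" using R(5) S(5) by simp_all
    then show "C [(x1, y1), (x2, y2)] \<le> nR x1 * nS y1 + nR x2 * nS y2"
      unfolding C_def by simp
  qed
  have "Inf {C ys | ys. tensor_eq (alg_act phi) (alg_act psi) ys z} = NZ C z"
    by (rule main_norm[OF assms Cnn Capp C2])
  then show "proj_tensor_norm_um nR nS (alg_act phi) (alg_act psi) z = proj_tensor_norm_um nR nS int_act int_act z"
    unfolding proj_tensor_norm_um_def NZ_def C_def by simp
qed

end
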